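(* If $(H,R)$ is a semiquasitriangular Hopf algebra, then for all $h\in H$ $$\nu(h)= R^{(2)}h_2R'^{(2)}\otimes S^{2}(R'^{(1)})S(h_1)S(R^{(1)})h_3 = R^{(1)}h_2S(R'^{(1)})\otimes S(h_1)R^{(2)}h_3R'^{(2)}.$$
   Context: All vector spaces are over a field $k$, $\otimes=\otimes_k$. For a Hopf algebra $H$ with comultiplication $\Delta$, counit $\epsilon$, antipode $S$, we use Sweedler notation $\Delta(h)=h_1\otimes h_2$, $(\Delta\otimes\mathrm{id})\Delta(h)=h_1\otimes h_2\otimes h_3$, etc. $\operatorname{Z}(H)$ is the centre of $H$. For $R\in H\otimes H$ we write $R=R^{(1)}\otimes R^{(2)}$ (summation understood); $R'^{(1)}\otimes R'^{(2)}$ denotes another copy of $R$. Definition (semiquasitriangular Hopf algebra): a pair $(H,R)$ with $H$ a Hopf algebra with bijective antipode and $R\in H\otimes H$ invertible such that (1) $R^{(1)}_1\otimes R^{(1)}_2\otimes R^{(2)} = R^{(1)}\otimes R'^{(1)}\otimes R^{(2)}R'^{(2)}$; (2) $R^{(1)}\otimes R^{(2)}_1\otimes R^{(2)}_2 = R^{(1)}R'^{(1)}\otimes R'^{(2)}\otimes R^{(2)}$; (3) $R^{(1)}\otimes R^{(2)}_2R'^{(1)}\otimes R^{(2)}_1R'^{(2)} = R^{(1)}\otimes R'^{(1)}R^{(2)}_1\otimes R'^{(2)}R^{(2)}_2$; (4) $R^{(1)}_2R'^{(1)}\otimes R^{(1)}_1R'^{(2)}\otimes R^{(2)} = R'^{(1)}R^{(1)}_1\otimes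 R'^{(2)}R^{(1)}_2\otimes R^{(2)}$; (5) $\nu(h):=R^{(2)}h_2R'^{(2)}\otimes S(h_1)S(R^{(1)})h_3R'^{(1)}\in H\otimes\operatorname{Z}(H)$ for all $h\in H$; (6) $\nu(h)=R^{(1)}h_2R'^{(1)}\otimes S(R'^{(2)})S(h_1)R^{(2)}h_3$ for all $h\in H$. The map $\nu:H\to H\otimes H$ in the claim is the one defined in (5). *)

theory Defs
  imports Complex_Main
begin

text \<open>An element of the n-fold tensor power of H is represented by a finite formal
sum of pure tensors x1 (x) ... (x) xn, i.e. by a list of lists (each inner list is a pure
tensor; scalars are absorbed into the factors, negatives via (-x1) (x) ...).
tens_eq scale s t means that s and t denote the same element of the tensor power
over the field: it is the smallest congruence on formal sums (commutative monoid
of lists under append) generated by additivity in each slot, vanishing of a pure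
tensor with a zero factor, and moving scalars between slots (k-balancedness).
This is the usual construction of the tensor product as a quotient of the free
abelian group on tuples.\<close>

inductive tens_eq :: "('k::field \<Rightarrow> 'h::ab_group_add \<Rightarrow> 'h) \<Rightarrow> 'h list list \<Rightarrow> 'h list list \<Rightarrow> bool"
  for scale :: "'k::field \<Rightarrow> 'h::ab_group_add \<Rightarrow> 'h" where
  te_refl: "tens_eq scale s s"
| te_sym: "tens_eq scale s t \<Longrightarrow> tens_eq scale t s"
| te_trans: "tens_eq scale s t \<Longrightarrow> tens_eq scale t u \<Longrightarrow> tens_eq scale s u"
| te_app: "tens_eq scale s s' \<Longrightarrow> tens_eq scale (s @ t) (s' @ t)"
| te_comm: "tens_eq scale (s @ t) (t @ s)"
| te_add: "tens_eq scale [xs @ [a + b] @ ys] [xs @ [a] @ ys, xs @ [b] @ ys]"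
| te_zero: "tens_eq scale [xs @ [0] @ ys] []"
| te_bal: "tens_eq scale [xs @ [scale c a] @ ys @ [b] @ zs] [xs @ [a] @ ys @ [scale c b] @ zs]"

definition t2 :: "('h \<times> 'h) list \<Rightarrow> 'h list list" where
  "t2 xs = map (\<lambda>(a, b). [a, b]) xs"

definition t3 :: "('h \<times> 'h \<times> 'h) list \<Rightarrow> 'h list list" where
  "t3 xs = map (\<lambda>(a, b, c). [a, b, c]) xs"

definition centre :: "'h::ring_1 set" where
  "centre = {z. \<forall>x. z * x = x * z}"

text \<open>A Hopf algebra over the field 'k: the ring 'h is a k-algebra via scale;
the comultiplication Delta h is a representative (formal sum of h1 (x) h2) of the
element of H (x) H; eps is the counit and S the antipode.\<close>

locale hopf_algebra = Vector_Spaces.vector_space scale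
  for scale :: "'k::field \<Rightarrow> 'h::ring_1 \<Rightarrow> 'h" +
  fixes Delta :: "'h \<Rightarrow> ('h \<times> 'h) list"
    and eps :: "'h \<Rightarrow> 'k"
    and S :: "'h \<Rightarrow> 'h"
  assumes scale_mult_left: "scale c (x * y) = scale c x * y"
    and scale_mult_right: "scale c (x * y) = x * scale c y"
    and Delta_add: "tens_eq scale (t2 (Delta (x + y))) (t2 (Delta x @ Delta y))"
    and Delta_scale: "tens_eq scale (t2 (Delta (scale c x))) (t2 [(scale c a, b). (a, b) \<leftarrow> Delta x])"
    and Delta_mult: "tens_eq scale (t2 (Delta (x * y)))
                        (t2 [(a * c, b * d). (a, b) \<leftarrow> Delta x, (c, d) \<leftarrow> Delta y])"
    and Delta_one: "tens_eq scale (t2 (Delta 1)) (t2 [(1, 1)])"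
    and coassoc: "tens_eq scale (t3 [(a1, a2, b). (a, b) \<leftarrow> Delta x, (a1, a2) \<leftarrow> Delta a])
                                (t3 [(a, b1, b2). (a, b) \<leftarrow> Delta x, (b1, b2) \<leftarrow> Delta b])"
    and eps_add: "eps (x + y) = eps x + eps y"
    and eps_scale: "eps (scale c x) = c * eps x"
    and eps_mult: "eps (x * y) = eps x * eps y"
    and eps_one: "eps 1 = 1"
    and counit_left: "(\<Sum>(a, b) \<leftarrow> Delta x. scale (eps a) b) = x"
    and counit_right: "(\<Sum>(a, b) \<leftarrow> Delta x. scale (eps b) a) = x"
    and S_add: "S (x + y) = S x + S y"
    and S_scale: "S (scale c x) = scale c (S x)"
    and antipode_left: "(\<Sum>(a, b) \<leftarrow> Delta x. S a * b) = scale (eps x) 1"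
    and antipode_right: "(\<Sum>(a, b) \<leftarrow> Delta x. a * S b) = scale (eps x) 1"
    and S_bij: "bij S"

text \<open>Iterated comultiplication h1 (x) h2 (x) h3 = (Delta (x) id) Delta h.\<close>
definition Delta2 :: "('h \<Rightarrow> ('h \<times> 'h) list) \<Rightarrow> 'h \<Rightarrow> ('h \<times> 'h \<times> 'h) list" where
  "Delta2 Delta x = [(a1, a2, b). (a, b) \<leftarrow> Delta x, (a1, a2) \<leftarrow> Delta a]"

definition nu :: "('h::ring_1 \<Rightarrow> ('h \<times> 'h) list) \<Rightarrow> ('h \<Rightarrow> 'h) \<Rightarrow> ('h \<times> 'h) list \<Rightarrow> 'h \<Rightarrow> ('h \<times> 'h) list" where
  "nu Delta S R x = [(r2 * h2 * s2, S h1 * S r1 * h3 * s1).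
      (r1, r2) \<leftarrow> R, (s1, s2) \<leftarrow> R, (h1, h2, h3) \<leftarrow> Delta2 Delta x]"

locale semiquasitriangular = hopf_algebra scale Delta eps S
  for scale :: "'k::field \<Rightarrow> 'h::ring_1 \<Rightarrow> 'h"
    and Delta :: "'h \<Rightarrow> ('h \<times> 'h) list"
    and eps :: "'h \<Rightarrow> 'k"
    and S :: "'h \<Rightarrow> 'h" +
  fixes R :: "('h \<times> 'h) list"
  assumes R_invertible: "\<exists>Q. tens_eq scale (t2 [(a * c, b * d). (a, b) \<leftarrow> R, (c, d) \<leftarrow> Q]) (t2 [(1, 1)])
                          \<and> tens_eq scale (t2 [(c * a, d * b). (a, b) \<leftarrow> R, (c, d) \<leftarrow> Q]) (t2 [(1, 1)])"
    and sq1: "tens_eq scale (t3 [(x1, x2, r2). (r1, r2) \<leftarrow> R, (x1, x2) \<leftarrow> Delta r1])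
                            (t3 [(r1, s1, r2 * s2). (r1, r2) \<leftarrow> R, (s1, s2) \<leftarrow> R])"
    and sq2: "tens_eq scale (t3 [(r1, y1, y2). (r1, r2) \<leftarrow> R, (y1, y2) \<leftarrow> Delta r2])
                            (t3 [(r1 * s1, s2, r2). (r1, r2) \<leftarrow> R, (s1, s2) \<leftarrow> R])"
    and sq3: "tens_eq scale (t3 [(r1, y2 * s1, y1 * s2). (r1, r2) \<leftarrow> R, (y1, y2) \<leftarrow> Delta r2, (s1, s2) \<leftarrow> R])
                            (t3 [(r1, s1 * y1, s2 * y2). (r1, r2) \<leftarrow> R, (y1, y2) \<leftarrow> Delta r2, (s1, s2) \<leftarrow> R])"
    and sq4: "tens_eq scale (t3 [(x2 * s1, x1 * s2, r2). (r1, r2) \<leftarrow> R, (x1, x2) \<leftarrow> Delta r1, (s1, s2) \<leftarrow> R])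
                            (t3 [(s1 * x1, s2 * x2, r2). (r1, r2) \<leftarrow> R, (x1, x2) \<leftarrow> Delta r1, (s1, s2) \<leftarrow> R])"
    and sq5: "\<exists>zs. (\<forall>(a, z) \<in> set zs. z \<in> centre) \<and> tens_eq scale (t2 (nu Delta S R x)) (t2 zs)"
    and sq6: "tens_eq scale (t2 (nu Delta S R x))
               (t2 [(r1 * h2 * s1, S s2 * S h1 * r2 * h3).
                     (r1, r2) \<leftarrow> R, (s1, s2) \<leftarrow> R, (h1, h2, h3) \<leftarrow> Delta2 Delta x])"

end

theory Submission
  imports Defs "HOL-Library.Multiset"
begin

declare tens_eq.te_trans[trans]

definition lift2 :: "('h \<Rightarrow> 'h \<Rightarrow> 'h list list) \<Rightarrow> 'h list \<Rightarrow> 'h list list" where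
  "lift2 W l = (case l of [p, q] \<Rightarrow> W p q | _ \<Rightarrow> [])"
definition lift3 :: "('h \<Rightarrow> 'h \<Rightarrow> 'h \<Rightarrow> 'h list list) \<Rightarrow> 'h list \<Rightarrow> 'h list list" where
  "lift3 W l = (case l of [p, q, r] \<Rightarrow> W p q r | _ \<Rightarrow> [])"
definition liftf2 :: "('h \<Rightarrow> 'h \<Rightarrow> 'h::zero) \<Rightarrow> 'h list \<Rightarrow> 'h" where
  "liftf2 W l = (case l of [p, q] \<Rightarrow> W p q | _ \<Rightarrow> 0)"
definition liftf3 :: "('h \<Rightarrow> 'h \<Rightarrow> 'h \<Rightarrow> 'h::zero) \<Rightarrow> 'h list \<Rightarrow> 'h" where
  "liftf3 W l = (case l of [p, q, r] \<Rightarrow> W p q r | _ \<Rightarrow> 0)"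

lemma lift2_split: "lift2 W (xs @ [a] @ ys) = (if xs = [] \<and> length ys = 1 then W a (hd ys)
   else if length xs = 1 \<and> ys = [] then W (hd xs) a else [])"
  by (cases xs; cases ys; auto simp: lift2_def split: list.split)

lemma liftf2_split: "liftf2 W (xs @ [a] @ ys) = (if xs = [] \<and> length ys = 1 then W a (hd ys)
   else if length xs = 1 \<and> ys = [] then W (hd xs) a else 0)"
  by (cases xs; cases ys; auto simp: liftf2_def split: list.split)

lemma concat_map_nil[simp]: "concat (map (\<lambda>y. []) Y) = []"
  by (induction Y) auto

lemma split3:
  obtains (c1) q r where "xs = []" "ys = [q, r]" | (c2) p r where "xs = [p]" "ys = [r]"
   | (c3) p q where "xs = [p, q]" "ys = []" | (c4) "length xs + length ys \<noteq> 2"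
proof -
  consider "length xs + length ys \<noteq> 2" | "length xs = 0" "length ys = 2" | "length xs = 1" "length ys = 1"
    | "length xs = 2" "length ys = 0" by linarith
  then show ?thesis
    by cases (auto simp: length_Suc_conv numeral_2_eq_2 intro: that)
qed

lemma lift3_len0: "length l \<noteq> 3 \<Longrightarrow> lift3 W l = []"
  by (auto simp: lift3_def split: list.split)
lemma liftf3_len0: "length l \<noteq> 3 \<Longrightarrow> liftf3 W l = 0"
  by (auto simp: liftf3_def split: list.split)
lemma lift3_len: "length xs + length ys \<noteq> 2 \<Longrightarrow> lift3 W (xs @ a # ys) = []"
  by (rule lift3_len0) simp
lemma liftf3_len: "length xs + length ys \<noteq> 2 \<Longrightarrow> liftf3 W (xs @ a # ys) = 0"
  by (rule liftf3_len0) simp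

context hopf_algebra begin

abbreviation te :: "'h list list \<Rightarrow> 'h list list \<Rightarrow> bool" (infix "\<approx>" 50) where
  "te s t \<equiv> tens_eq scale s t"

lemma te_refl'[simp]: "s \<approx> s" by (rule te_refl)

lemma te_left: "s \<approx> s' \<Longrightarrow> u @ s \<approx> u @ s'"
  by (meson te_app te_comm te_trans)

lemma te_cong: "s \<approx> s' \<Longrightarrow> t \<approx> t' \<Longrightarrow> s @ t \<approx> s' @ t'"
  by (meson te_app te_left te_trans)

lemma te_cons: "s \<approx> s' \<Longrightarrow> x # s \<approx> x # s'"
  using te_left[of s s' "[x]"] by simp

lemma te_perm: "mset s = mset t \<Longrightarrow> s \<approx> t"
proof (induction s arbitrary: t)
  case Nil then show ?case by simp
next
  case (Cons x s)
  then have "x \<in> set t" by (metis list.set_intros(1) set_mset_mset)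
  then obtain t1 t2 where t: "t = t1 @ x # t2" by (meson split_list)
  with Cons.prems have "mset s = mset (t1 @ t2)" by simp
  then have "s \<approx> t1 @ t2" by (rule Cons.IH)
  then have "x # s \<approx> x # (t1 @ t2)" by (rule te_cons)
  also have "x # (t1 @ t2) \<approx> t1 @ x # t2"
    using te_app[OF te_comm[of scale "[x]" t1], of t2] by simp
  finally show ?case using t by simp
qed

lemma te_concat: "(\<And>a. a \<in> set A \<Longrightarrow> f a \<approx> g a) \<Longrightarrow> concat (map f A) \<approx> concat (map g A)"
  by (induction A) (auto intro: te_cong)

definition sc :: "'k \<Rightarrow> 'h list list \<Rightarrow> 'h list list" where
  "sc c T = map (\<lambda>l. case l of [] \<Rightarrow> [] | x # r \<Rightarrow> scale c x # r) T"

lemma sc_nil[simp]: "sc c [] = []" by (simp add: sc_def)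
lemma sc_cons[simp]: "sc c (l # T) = (case l of [] \<Rightarrow> [] | x # r \<Rightarrow> scale c x # r) # sc c T"
  by (simp add: sc_def)
lemma sc_app[simp]: "sc c (T @ T') = sc c T @ sc c T'" by (simp add: sc_def)
lemma sc_concat[simp]: "sc c (concat L) = concat (map (sc c) L)"
  by (induction L) simp_all

definition mlin :: "('h list \<Rightarrow> 'h list list) \<Rightarrow> bool" where
  "mlin F \<longleftrightarrow> (\<forall>xs a b ys. F (xs @ [a + b] @ ys) \<approx> F (xs @ [a] @ ys) @ F (xs @ [b] @ ys))
     \<and> (\<forall>xs c a ys. F (xs @ [scale c a] @ ys) \<approx> sc c (F (xs @ [a] @ ys)))
     \<and> (\<forall>xs ys. F (xs @ [0] @ ys) \<approx> [])"

lemma mlin_te: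
  assumes F: "mlin F" and st: "s \<approx> t"
  shows "concat (map F s) \<approx> concat (map F t)"
  using st
proof (induction rule: tens_eq.induct)
  case (te_refl s) then show ?case by simp
next
  case (te_sym s t) then show ?case by (meson tens_eq.te_sym)
next
  case (te_trans s t u) then show ?case by (meson tens_eq.te_trans)
next
  case (te_app s s' t) then show ?case by (simp add: tens_eq.te_app)
next
  case (te_comm s t) then show ?case by (simp add: tens_eq.te_comm)
next
  case (te_add xs a b ys) then show ?case using F by (simp add: mlin_def)
next
  case (te_zero xs ys) then show ?case using F by (simp add: mlin_def)
next
  case (te_bal xs c a ys b zs)
  have 1: "F (xs @ [scale c a] @ ys @ [b] @ zs) \<approx> sc c (F (xs @ [a] @ ys @ [b] @ zs))"
    using F unfolding mlin_def by blast
  have 2: "F (xs @ [a] @ ys @ [scale c b] @ zs) \<approx> sc c (F (xs @ [a] @ ys @ [b] @ zs))"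
    using F[unfolded mlin_def, THEN conjunct2, THEN conjunct1, rule_format, of "xs @ [a] @ ys" c b zs]
    by simp
  show ?case using tens_eq.te_trans[OF 1 tens_eq.te_sym[OF 2]] by simp
qed

definition bil :: "('h \<Rightarrow> 'h \<Rightarrow> 'h list list) \<Rightarrow> bool" where
  "bil W \<longleftrightarrow> (\<forall>p p' q. W (p + p') q \<approx> W p q @ W p' q) \<and> (\<forall>p q q'. W p (q + q') \<approx> W p q @ W p q')
    \<and> (\<forall>c p q. W (scale c p) q \<approx> sc c (W p q)) \<and> (\<forall>c p q. W p (scale c q) \<approx> sc c (W p q))
    \<and> (\<forall>q. W 0 q \<approx> []) \<and> (\<forall>p. W p 0 \<approx> [])"

lemma mlin_lift2: assumes "bil W" shows "mlin (lift2 W)"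
proof -
  note a = assms[unfolded bil_def]
  show ?thesis unfolding mlin_def lift2_split using a by (simp split: if_split)
qed

definition tril :: "('h \<Rightarrow> 'h \<Rightarrow> 'h \<Rightarrow> 'h list list) \<Rightarrow> bool" where
  "tril W \<longleftrightarrow> (\<forall>p p' q r. W (p + p') q r \<approx> W p q r @ W p' q r)
    \<and> (\<forall>p q q' r. W p (q + q') r \<approx> W p q r @ W p q' r)
    \<and> (\<forall>p q r r'. W p q (r + r') \<approx> W p q r @ W p q r')
    \<and> (\<forall>c p q r. W (scale c p) q r \<approx> sc c (W p q r)) \<and> (\<forall>c p q r. W p (scale c q) r \<approx> sc c (W p q r))
    \<and> (\<forall>c p q r. W p q (scale c r) \<approx> sc c (W p q r))
    \<and> (\<forall>q r. W 0 q r \<approx> []) \<and> (\<forall>p r. W p 0 r \<approx> []) \<and> (\<forall>p q. W p q 0 \<approx> [])"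

lemma mlin_lift3: assumes "tril W" shows "mlin (lift3 W)"
proof -
  note a = assms[unfolded tril_def]
  show ?thesis unfolding mlin_def
    apply (intro conjI allI)
    subgoal for xs x y ys
    proof (cases xs ys rule: split3)
      case c4 then show ?thesis by (simp add: lift3_len)
    qed (simp_all add: lift3_def a)
    subgoal for xs x y ys
    proof (cases xs ys rule: split3)
      case c4 then show ?thesis by (simp add: lift3_len)
    qed (simp_all add: lift3_def a)
    subgoal for xs ys
    proof (cases xs ys rule: split3)
      case c4 then show ?thesis by (simp add: lift3_len)
    qed (simp_all add: lift3_def a)
    done
qed

definition mlinf :: "('h list \<Rightarrow> 'h) \<Rightarrow> bool" where
  "mlinf F \<longleftrightarrow> (\<forall>xs a b ys. F (xs @ [a + b] @ ys) = F (xs @ [a] @ ys) + F (xs @ [b] @ ys))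
     \<and> (\<forall>xs c a ys. F (xs @ [scale c a] @ ys) = scale c (F (xs @ [a] @ ys)))"

lemma mlinf_te:
  assumes F: "mlinf F" and st: "s \<approx> t"
  shows "sum_list (map F s) = sum_list (map F t)"
  using st
proof (induction rule: tens_eq.induct)
  case (te_comm s t) then show ?case by (simp add: add.commute)
next
  case (te_add xs a b ys) then show ?case using F by (simp add: mlinf_def)
next
  case (te_zero xs ys)
  have "F (xs @ [scale 0 0] @ ys) = scale 0 (F (xs @ [0] @ ys))" using F unfolding mlinf_def by blast
  then show ?case by simp
next
  case (te_bal xs c a ys b zs)
  have 1: "F (xs @ [scale c a] @ ys @ [b] @ zs) = scale c (F (xs @ [a] @ ys @ [b] @ zs))"
    using F unfolding mlinf_def by blast
  have 2: "F ((xs @ [a] @ ys) @ [scale c b] @ zs) = scale c (F ((xs @ [a] @ ys) @ [b] @ zs))"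
    using F unfolding mlinf_def by blast
  show ?case using 1 2 by simp
qed auto

definition bilf :: "('h \<Rightarrow> 'h \<Rightarrow> 'h) \<Rightarrow> bool" where
  "bilf W \<longleftrightarrow> (\<forall>p p' q. W (p + p') q = W p q + W p' q) \<and> (\<forall>p q q'. W p (q + q') = W p q + W p q')
    \<and> (\<forall>c p q. W (scale c p) q = scale c (W p q)) \<and> (\<forall>c p q. W p (scale c q) = scale c (W p q))"

lemma mlinf_liftf2: assumes "bilf W" shows "mlinf (liftf2 W)"
proof -
  note a = assms[unfolded bilf_def]
  show ?thesis unfolding mlinf_def liftf2_split using a by (simp split: if_split)
qed

definition trif :: "('h \<Rightarrow> 'h \<Rightarrow> 'h \<Rightarrow> 'h) \<Rightarrow> bool" where
  "trif W \<longleftrightarrow> (\<forall>p p' q r. W (p + p') q r = W p q r + W p' q r)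
    \<and> (\<forall>p q q' r. W p (q + q') r = W p q r + W p q' r)
    \<and> (\<forall>p q r r'. W p q (r + r') = W p q r + W p q r')
    \<and> (\<forall>c p q r. W (scale c p) q r = scale c (W p q r)) \<and> (\<forall>c p q r. W p (scale c q) r = scale c (W p q r))
    \<and> (\<forall>c p q r. W p q (scale c r) = scale c (W p q r))"

lemma mlinf_liftf3: assumes "trif W" shows "mlinf (liftf3 W)"
proof -
  note a = assms[unfolded trif_def]
  show ?thesis unfolding mlinf_def
    apply (intro conjI allI)
    subgoal for xs x y ys
    proof (cases xs ys rule: split3)
      case c4 then show ?thesis by (simp add: liftf3_len)
    qed (simp_all add: liftf3_def a)
    subgoal for xs x y ys
    proof (cases xs ys rule: split3)
      case c4 then show ?thesis by (simp add: liftf3_len)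
    qed (simp_all add: liftf3_def a)
    done
qed


definition lin :: "('h \<Rightarrow> 'h) \<Rightarrow> bool" where
  "lin f \<longleftrightarrow> (\<forall>a b. f (a + b) = f a + f b) \<and> (\<forall>c a. f (scale c a) = scale c (f a))"

lemma lin_add: "lin f \<Longrightarrow> f (a + b) = f a + f b" by (simp add: lin_def)
lemma lin_scale: "lin f \<Longrightarrow> f (scale c a) = scale c (f a)" by (simp add: lin_def)
lemma lin_zero: "lin f \<Longrightarrow> f 0 = 0"
  using lin_scale[of f 0 0] by simp

lemma lin_id: "lin (\<lambda>p. p)" by (simp add: lin_def)
lemma lin_S: "lin S" by (simp add: lin_def S_add S_scale)
lemma lin_lmult: "lin f \<Longrightarrow> lin (\<lambda>p. a * f p)"
  by (simp add: lin_def distrib_left scale_mult_right)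
lemma lin_rmult: "lin f \<Longrightarrow> lin (\<lambda>p. f p * b)"
  by (simp add: lin_def distrib_right scale_mult_left)
lemma lin_Sc: "lin f \<Longrightarrow> lin (\<lambda>p. S (f p))"
  by (simp add: lin_def S_add S_scale)

lemma te_add1: "[[a + b, y]] \<approx> [[a, y], [b, y]]"
  using te_add[of scale "[]" a b "[y]"] by simp
lemma te_add2: "[[y, a + b]] \<approx> [[y, a], [y, b]]"
  using te_add[of scale "[y]" a b "[]"] by simp
lemma te_bal12: "[[scale c a, b]] \<approx> [[a, scale c b]]"
  using te_bal[of scale "[]" c a "[]" b "[]"] by simp
lemma te_zero1: "[[0, y]] \<approx> []"
  using te_zero[of scale "[]" "[y]"] by simp
lemma te_zero2: "[[y, 0]] \<approx> []"
  using te_zero[of scale "[y]" "[]"] by simp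

lemma bil_pure: assumes "lin A" "lin B" shows "bil (\<lambda>p q. [[A p, B q]])"
  unfolding bil_def using assms
  by (auto simp: lin_add lin_scale lin_zero te_add1 te_add2 te_zero1 te_zero2 intro: te_sym te_bal12)

lemma bil_pure_sw: assumes "lin A" "lin B" shows "bil (\<lambda>p q. [[B q, A p]])"
  unfolding bil_def using assms
  by (auto simp: lin_add lin_scale lin_zero te_add1 te_add2 te_zero1 te_zero2 intro: te_sym te_bal12)

lemma te_concat_app: "concat (map (\<lambda>y. f y @ g y) Y) \<approx> concat (map f Y) @ concat (map g Y)"
  by (rule te_perm) (induction Y, auto simp: ac_simps)

lemma bil_concat: assumes "\<And>y. y \<in> set Y \<Longrightarrow> bil (W y)"
  shows "bil (\<lambda>p q. concat (map (\<lambda>y. W y p q) Y))"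
proof -
  have a: "\<And>y p p' q. y \<in> set Y \<Longrightarrow> W y (p + p') q \<approx> W y p q @ W y p' q"
    "\<And>y p q q'. y \<in> set Y \<Longrightarrow> W y p (q + q') \<approx> W y p q @ W y p q'"
    "\<And>y c p q. y \<in> set Y \<Longrightarrow> W y (scale c p) q \<approx> sc c (W y p q)"
    "\<And>y c p q. y \<in> set Y \<Longrightarrow> W y p (scale c q) \<approx> sc c (W y p q)"
    "\<And>y q. y \<in> set Y \<Longrightarrow> W y 0 q \<approx> []"
    "\<And>y p. y \<in> set Y \<Longrightarrow> W y p 0 \<approx> []"
    using assms unfolding bil_def by blast+
  have z: "concat (map (\<lambda>y. []) Y) = []" by simp
  show ?thesis unfolding bil_def
  proof (intro conjI allI)
    fix p p' q show "concat (map (\<lambda>y. W y (p + p') q) Y) \<approx> concat (map (\<lambda>y. W y p q) Y) @ concat (map (\<lambda>y. W y p' q) Y)"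
      by (rule te_trans[OF _ te_concat_app], rule te_concat, rule a(1))
  next
    fix p q q' show "concat (map (\<lambda>y. W y p (q + q')) Y) \<approx> concat (map (\<lambda>y. W y p q) Y) @ concat (map (\<lambda>y. W y p q') Y)"
      by (rule te_trans[OF _ te_concat_app], rule te_concat, rule a(2))
  next
    fix c p q show "concat (map (\<lambda>y. W y (scale c p) q) Y) \<approx> sc c (concat (map (\<lambda>y. W y p q) Y))"
      using te_concat[of Y _ "\<lambda>y. sc c (W y p q)"] a(3) by (simp add: comp_def)
  next
    fix c p q show "concat (map (\<lambda>y. W y p (scale c q)) Y) \<approx> sc c (concat (map (\<lambda>y. W y p q) Y))"
      using te_concat[of Y _ "\<lambda>y. sc c (W y p q)"] a(4) by (simp add: comp_def)
  next
    fix q show "concat (map (\<lambda>y. W y 0 q) Y) \<approx> []"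
      using te_concat[of Y "\<lambda>y. W y 0 q" "\<lambda>y. []"] a(5) by simp
  next
    fix p show "concat (map (\<lambda>y. W y p 0) Y) \<approx> []"
      using te_concat[of Y "\<lambda>y. W y p 0" "\<lambda>y. []"] a(6) by simp
  qed
qed

lemma bil_gen: assumes "\<And>y. y \<in> set Y \<Longrightarrow> lin (A y)" "\<And>y. y \<in> set Y \<Longrightarrow> lin (B y)"
  shows "bil (\<lambda>p q. concat (map (\<lambda>y. [[A y p, B y q]]) Y))"
  by (rule bil_concat) (rule bil_pure; simp add: assms)

lemma bil_gen_sw: assumes "\<And>y. y \<in> set Y \<Longrightarrow> lin (A y)" "\<And>y. y \<in> set Y \<Longrightarrow> lin (B y)"
  shows "bil (\<lambda>p q. concat (map (\<lambda>y. [[B y q, A y p]]) Y))"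
  by (rule bil_concat) (rule bil_pure_sw; simp add: assms)

lemma te_map2: assumes "bil W" "t2 X \<approx> t2 Y"
  shows "concat (map (\<lambda>(a, b). W a b) X) \<approx> concat (map (\<lambda>(a, b). W a b) Y)"
proof -
  have e: "concat (map (lift2 W) (t2 X)) = concat (map (\<lambda>(a, b). W a b) X)" for X
    by (induction X) (auto simp: t2_def lift2_def)
  show ?thesis using mlin_te[OF mlin_lift2[OF assms(1)] assms(2)] by (simp add: e)
qed

lemma te_map3: assumes "tril W" "t3 X \<approx> t3 Y"
  shows "concat (map (\<lambda>(a, b, c). W a b c) X) \<approx> concat (map (\<lambda>(a, b, c). W a b c) Y)"
proof -
  have e: "concat (map (lift3 W) (t3 X)) = concat (map (\<lambda>(a, b, c). W a b c) X)" for X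
    by (induction X) (auto simp: t3_def lift3_def)
  show ?thesis using mlin_te[OF mlin_lift3[OF assms(1)] assms(2)] by (simp add: e)
qed

lemma te_fun2: assumes "bilf W" "t2 X \<approx> t2 Y"
  shows "(\<Sum>(a, b)\<leftarrow>X. W a b) = (\<Sum>(a, b)\<leftarrow>Y. W a b)"
proof -
  have e: "sum_list (map (liftf2 W) (t2 X)) = (\<Sum>(a, b)\<leftarrow>X. W a b)" for X
    by (induction X) (auto simp: t2_def liftf2_def)
  show ?thesis using mlinf_te[OF mlinf_liftf2[OF assms(1)] assms(2)] by (simp add: e)
qed

lemma te_fun3: assumes "trif W" "t3 X \<approx> t3 Y"
  shows "(\<Sum>(a, b, c)\<leftarrow>X. W a b c) = (\<Sum>(a, b, c)\<leftarrow>Y. W a b c)"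
proof -
  have e: "sum_list (map (liftf3 W) (t3 X)) = (\<Sum>(a, b, c)\<leftarrow>X. W a b c)" for X
    by (induction X) (auto simp: t3_def liftf3_def)
  show ?thesis using mlinf_te[OF mlinf_liftf3[OF assms(1)] assms(2)] by (simp add: e)
qed

lemma te_sum1: "[[sum_list L, y]] \<approx> map (\<lambda>a. [a, y]) L"
proof (induction L)
  case Nil then show ?case by (simp add: te_zero1)
next
  case (Cons a L)
  have "[[a + sum_list L, y]] \<approx> [[a, y], [sum_list L, y]]" by (rule te_add1)
  also have "\<dots> \<approx> [a, y] # map (\<lambda>a. [a, y]) L"
    using te_cons[OF Cons.IH, of "[a, y]"] by simp
  finally show ?case by simp
qed

lemma te_sum2: "[[y, sum_list L]] \<approx> map (\<lambda>a. [y, a]) L"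
proof (induction L)
  case Nil then show ?case by (simp add: te_zero2)
next
  case (Cons a L)
  have "[[y, a + sum_list L]] \<approx> [[y, a], [y, sum_list L]]" by (rule te_add2)
  also have "\<dots> \<approx> [y, a] # map (\<lambda>a. [y, a]) L"
    using te_cons[OF Cons.IH, of "[y, a]"] by simp
  finally show ?case by simp
qed

lemma bilf_Smult: "bilf (\<lambda>p q. S p * q)"
  by (simp add: bilf_def S_add S_scale distrib_left distrib_right flip: scale_mult_left scale_mult_right)

lemma S_one: "S 1 = 1"
proof -
  have "(\<Sum>(a, b)\<leftarrow>Delta 1. S a * b) = (\<Sum>(a, b)\<leftarrow>[(1, 1)]. S a * b)"
    by (rule te_fun2[OF bilf_Smult Delta_one])
  then show ?thesis using antipode_left[of 1] by (simp add: eps_one)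
qed

end

definition mul :: "('h::times \<times> 'h) list \<Rightarrow> ('h \<times> 'h) list \<Rightarrow> ('h \<times> 'h) list" where
  "mul X Y = [(a * c, b * d). (a, b) \<leftarrow> X, (c, d) \<leftarrow> Y]"

lemma mul_cons: "mul (x # X) Y = map (\<lambda>(c, d). (fst x * c, snd x * d)) Y @ mul X Y"
  by (cases x) (simp add: mul_def)
lemma mul_nil: "mul [] Y = []" by (simp add: mul_def)
lemma mul_app: "mul (X @ X') Y = mul X Y @ mul X' Y" by (simp add: mul_def)
lemma mul_map: "mul (map (\<lambda>(c, d). (a * c, b * d)) Y) (Z::('h::semigroup_mult \<times> 'h) list) = map (\<lambda>(c, d). (a * c, b * d)) (mul Y Z)"
  by (induction Y) (auto simp: mul_def mult.assoc)
lemma mul_assoc: "mul (mul X Y) (Z::('h::semigroup_mult \<times> 'h) list) = mul X (mul Y Z)"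
  apply (induction X) 
  apply (simp add: mul_nil)
  apply (simp add: mul_cons mul_app)
  apply (rule mul_map)
  done

lemma mul_one_right[simp]: "mul X [(1, 1::'h::monoid_mult)] = X"
  by (induction X) (auto simp: mul_def)
lemma mul_one_left[simp]: "mul [(1, 1::'h::monoid_mult)] X = X"
  by (induction X) (auto simp: mul_def)

context hopf_algebra begin
lemma te_mul_left: assumes "t2 X \<approx> t2 X'" shows "t2 (mul X Y) \<approx> t2 (mul X' Y)"
proof -
  have b: "bil (\<lambda>p q. concat (map (\<lambda>y. [[p * fst y, q * snd y]]) Y))"
    by (rule bil_gen) (intro lin_rmult lin_id)+
  have e: "t2 (mul X Y) = concat (map (\<lambda>(p, q). concat (map (\<lambda>y. [[p * fst y, q * snd y]]) Y)) X)" for X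
    by (simp add: t2_def mul_def map_concat split_def comp_def)
  show ?thesis unfolding e by (rule te_map2[OF b assms])
qed
lemma te_mul_right: assumes "t2 Y \<approx> t2 Y'" shows "t2 (mul X Y) \<approx> t2 (mul X Y')"
proof -
  have b: "\<And>x. bil (\<lambda>p q. [[fst x * p, snd x * q]])"
    by (rule bil_pure) (intro lin_lmult lin_id)+
  have e: "t2 (mul X Y) = concat (map (\<lambda>x. concat (map (\<lambda>(p, q). [[fst x * p, snd x * q]]) Y)) X)" for Y
    by (simp add: t2_def mul_def map_concat split_def comp_def)
  show ?thesis unfolding e by (rule te_concat) (rule te_map2[OF b assms])
qed
lemma sum_map_concat[simp]: "sum_list (map f (concat L)) = (\<Sum>l\<leftarrow>L. sum_list (map f l))"
  by (induction L) auto

lemma sum_zero_map[simp]: "(\<Sum>b\<leftarrow>B. (0::'a::comm_monoid_add)) = 0"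
  by (induction B) auto

lemma sum_swap: "(\<Sum>a\<leftarrow>A. \<Sum>b\<leftarrow>B. f a b) = (\<Sum>b\<leftarrow>B. \<Sum>a\<leftarrow>A. (f a b::'a::comm_monoid_add))"
  by (induction A) (simp_all add: sum_list_addf)

lemma sum_swap2: "(\<Sum>(a, b)\<leftarrow>A. \<Sum>(c, d)\<leftarrow>B. f a b c d) = (\<Sum>(c, d)\<leftarrow>B. \<Sum>(a, b)\<leftarrow>A. (f a b c d :: 'a::comm_monoid_add))"
  unfolding split_def by (rule sum_swap)

lemma sum_swap3: "(\<Sum>(a, b, c)\<leftarrow>A. \<Sum>(d, e, f)\<leftarrow>B. g a b c d e f) = (\<Sum>(d, e, f)\<leftarrow>B. \<Sum>(a, b, c)\<leftarrow>A. (g a b c d e f :: 'a::comm_monoid_add))"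
  unfolding split_def by (rule sum_swap)


lemma S_zero: "S 0 = 0" using S_scale[of 0 0] by simp
lemma S_sum: "S (\<Sum>a\<leftarrow>L. f a) = (\<Sum>a\<leftarrow>L. S (f a))"
  by (induction L) (simp_all add: S_add S_zero)
lemma scale_sum: "scale c (\<Sum>a\<leftarrow>L. f a) = (\<Sum>a\<leftarrow>L. scale c (f a))"
  by (induction L) (simp_all add: scale_right_distrib)

lemmas push = split_def mult.assoc sum_list_const_mult[symmetric] sum_list_mult_const[symmetric] S_sum scale_sum

lemma S_antimult: "S (x * y) = S y * S x"
proof -
  define D2' where "D2' z = [(a, b1, b2). (a, b) \<leftarrow> Delta z, (b1, b2) \<leftarrow> Delta b]" for z
  define T where "T DX DY = (\<Sum>(x1, x2, x3)\<leftarrow>DX. \<Sum>(y1, y2, y3)\<leftarrow>DY. S (x1 * y1) * x2 * y2 * S y3 * S x3)" for DX DY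
  have coa: "t3 (Delta2 Delta z) \<approx> t3 (D2' z)" for z using coassoc unfolding Delta2_def D2'_def .
  have tri1: "trif (\<lambda>x1 x2 x3. \<Sum>(y1, y2, y3)\<leftarrow>DY. S (x1 * y1) * x2 * y2 * S y3 * S x3)" for DY
    unfolding trif_def
    by (simp add: split_def S_add S_scale distrib_left distrib_right sum_list_addf flip: scale_mult_left scale_mult_right scale_sum)
  have tri2: "trif (\<lambda>y1 y2 y3. \<Sum>(x1, x2, x3)\<leftarrow>DX. S (x1 * y1) * x2 * y2 * S y3 * S x3)" for DX
    unfolding trif_def
    by (simp add: split_def S_add S_scale distrib_left distrib_right sum_list_addf flip: scale_mult_left scale_mult_right scale_sum)
  have sA: "T (Delta2 Delta x) DY = T (D2' x) DY" for DY unfolding T_def by (rule te_fun3[OF tri1 coa])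
  have sB: "T DX (Delta2 Delta y) = T DX (D2' y)" for DX
  proof -
    have sw: "T DX DY = (\<Sum>(y1, y2, y3)\<leftarrow>DY. \<Sum>(x1, x2, x3)\<leftarrow>DX. S (x1 * y1) * x2 * y2 * S y3 * S x3)" for DY
      unfolding T_def by (rule sum_swap3)
    show ?thesis unfolding sw by (rule te_fun3[OF tri2 coa])
  qed
  have e2: "T (D2' x) (D2' y) = S (x * y)"
  proof -
    have "T (D2' x) (D2' y) = (\<Sum>(x1, c)\<leftarrow>Delta x. \<Sum>(x2, x3)\<leftarrow>Delta c. \<Sum>(y1, d)\<leftarrow>Delta y. \<Sum>(y2, y3)\<leftarrow>Delta d.
        S (x1 * y1) * x2 * y2 * S y3 * S x3)"
      by (simp add: T_def D2'_def split_def comp_def)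
    also have "\<dots> = (\<Sum>(x1, c)\<leftarrow>Delta x. \<Sum>(x2, x3)\<leftarrow>Delta c. \<Sum>(y1, d)\<leftarrow>Delta y. scale (eps d) (S (x1 * y1) * x2 * S x3))"
    proof -
      have i1: "(\<Sum>(y2, y3)\<leftarrow>Delta d. S (x1 * y1) * x2 * y2 * S y3 * S x3) = scale (eps d) (S (x1 * y1) * x2 * S x3)"
        for x1 y1 x2 x3 d
      proof -
        have "(\<Sum>(y2, y3)\<leftarrow>Delta d. S (x1 * y1) * x2 * y2 * S y3 * S x3) = S (x1 * y1) * x2 * (\<Sum>(y2, y3)\<leftarrow>Delta d. y2 * S y3) * S x3"
          by (simp add: push)
        also have "\<dots> = S (x1 * y1) * x2 * scale (eps d) 1 * S x3" by (simp add: antipode_right)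
        also have "\<dots> = scale (eps d) (S (x1 * y1) * x2 * S x3)" by (simp flip: scale_mult_left scale_mult_right)
        finally show ?thesis .
      qed
      show ?thesis by (simp only: i1)
    qed
    also have "\<dots> = (\<Sum>(x1, c)\<leftarrow>Delta x. \<Sum>(x2, x3)\<leftarrow>Delta c. S (x1 * y) * x2 * S x3)"
    proof -
      have i2: "(\<Sum>(y1, d)\<leftarrow>Delta y. scale (eps d) (S (x1 * y1) * x2 * S x3)) = S (x1 * y) * x2 * S x3" for x1 x2 x3
      proof -
        have "(\<Sum>(y1, d)\<leftarrow>Delta y. scale (eps d) (S (x1 * y1) * x2 * S x3)) = (\<Sum>(y1, d)\<leftarrow>Delta y. S (x1 * scale (eps d) y1) * x2 * S x3)"
          by (simp add: S_scale flip: scale_mult_left scale_mult_right)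
        also have "\<dots> = S (x1 * (\<Sum>(y1, d)\<leftarrow>Delta y. scale (eps d) y1)) * x2 * S x3"
          by (simp add: push)
        also have "\<dots> = S (x1 * y) * x2 * S x3" by (simp add: counit_right)
        finally show ?thesis .
      qed
      show ?thesis by (simp only: i2)
    qed
    also have "\<dots> = (\<Sum>(x1, c)\<leftarrow>Delta x. S (scale (eps c) x1 * y))"
    proof -
      have i3: "(\<Sum>(x2, x3)\<leftarrow>Delta c. S (x1 * y) * x2 * S x3) = S (scale (eps c) x1 * y)" for x1 c
      proof -
        have "(\<Sum>(x2, x3)\<leftarrow>Delta c. S (x1 * y) * x2 * S x3) = S (x1 * y) * (\<Sum>(x2, x3)\<leftarrow>Delta c. x2 * S x3)"
          by (simp add: push)
        also have "\<dots> = S (x1 * y) * scale (eps c) 1" by (simp add: antipode_right)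
        also have "\<dots> = S (scale (eps c) x1 * y)" by (simp add: S_scale flip: scale_mult_left scale_mult_right)
        finally show ?thesis .
      qed
      show ?thesis by (simp only: i3)
    qed
    also have "\<dots> = S ((\<Sum>(x1, c)\<leftarrow>Delta x. scale (eps c) x1) * y)"
      by (simp add: push)
    also have "\<dots> = S (x * y)" by (simp add: counit_right)
    finally show ?thesis .
  qed
  have e1: "T (Delta2 Delta x) (Delta2 Delta y) = S y * S x"
  proof -
    have "T (Delta2 Delta x) (Delta2 Delta y) = (\<Sum>(a, x3)\<leftarrow>Delta x. \<Sum>(x1, x2)\<leftarrow>Delta a. \<Sum>(b, y3)\<leftarrow>Delta y. \<Sum>(y1, y2)\<leftarrow>Delta b.
        S (x1 * y1) * x2 * y2 * S y3 * S x3)"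
      by (simp add: T_def Delta2_def split_def comp_def)
    also have "\<dots> = (\<Sum>(a, x3)\<leftarrow>Delta x. \<Sum>(b, y3)\<leftarrow>Delta y. \<Sum>(x1, x2)\<leftarrow>Delta a. \<Sum>(y1, y2)\<leftarrow>Delta b.
        S (x1 * y1) * x2 * y2 * S y3 * S x3)"
      by (subst sum_swap2) (rule refl)
    also have "\<dots> = (\<Sum>(a, x3)\<leftarrow>Delta x. \<Sum>(b, y3)\<leftarrow>Delta y. scale (eps a * eps b) 1 * (S y3 * S x3))"
    proof -
      have j: "(\<Sum>(x1, x2)\<leftarrow>Delta a. \<Sum>(y1, y2)\<leftarrow>Delta b. S (x1 * y1) * x2 * y2 * S y3 * S x3)
          = scale (eps a * eps b) 1 * (S y3 * S x3)" for a b x3 y3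
      proof -
        have "(\<Sum>(x1, x2)\<leftarrow>Delta a. \<Sum>(y1, y2)\<leftarrow>Delta b. S (x1 * y1) * x2 * y2 * S y3 * S x3)
           = (\<Sum>(x1, x2)\<leftarrow>Delta a. \<Sum>(y1, y2)\<leftarrow>Delta b. S (x1 * y1) * (x2 * y2)) * (S y3 * S x3)"
          by (simp add: push)
        also have "(\<Sum>(x1, x2)\<leftarrow>Delta a. \<Sum>(y1, y2)\<leftarrow>Delta b. S (x1 * y1) * (x2 * y2)) = (\<Sum>(c, d)\<leftarrow>mul (Delta a) (Delta b). S c * d)"
          by (simp add: mul_def split_def comp_def)
        also have "\<dots> = (\<Sum>(c, d)\<leftarrow>Delta (a * b). S c * d)"
          using te_fun2[OF bilf_Smult Delta_mult[of a b]] by (simp add: mul_def)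
        also have "\<dots> = scale (eps a * eps b) 1" by (simp add: antipode_left eps_mult)
        finally show ?thesis .
      qed
      show ?thesis by (simp only: j)
    qed
    also have "\<dots> = (\<Sum>(a, x3)\<leftarrow>Delta x. \<Sum>(b, y3)\<leftarrow>Delta y. S (scale (eps b) y3) * S (scale (eps a) x3))"
      by (simp add: S_scale mult.commute flip: scale_mult_left scale_mult_right)
    also have "\<dots> = S (\<Sum>(b, y3)\<leftarrow>Delta y. scale (eps b) y3) * S (\<Sum>(a, x3)\<leftarrow>Delta x. scale (eps a) x3)"
      by (simp add: push)
    also have "\<dots> = S y * S x" by (simp add: counit_left)
    finally show ?thesis .
  qed
  show ?thesis using sA sB e1 e2 by simp
qed


lemma te_swap: "concat (map (\<lambda>a. concat (map (\<lambda>b. f a b) B)) A) \<approx> concat (map (\<lambda>b. concat (map (\<lambda>a. f a b) A)) B)"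
  by (rule te_perm) (simp add: mset_concat comp_def, rule sum_swap)

lemma te_swap2: "concat (map (\<lambda>(a, b). concat (map (\<lambda>(c, d). f a b c d) B)) A) \<approx> concat (map (\<lambda>(c, d). concat (map (\<lambda>(a, b). f a b c d) A)) B)"
  unfolding split_def by (rule te_swap)

lemma te_concat2: "(\<And>a b. (a, b) \<in> set A \<Longrightarrow> f a b \<approx> g a b) \<Longrightarrow>
  concat (map (\<lambda>(a, b). f a b) A) \<approx> concat (map (\<lambda>(a, b). g a b) A)"
  by (rule te_concat) auto

lemma te_balL: "y = scale c a \<Longrightarrow> [[a, scale c b]] \<approx> [[y, b]]"
  using tens_eq.te_sym[OF te_bal12[of c a b]] by simp
lemma te_balR: "y = scale c b \<Longrightarrow> [[a, y]] \<approx> [[scale c a, b]]"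
  using tens_eq.te_sym[OF te_bal12[of c a b]] by simp

lemma concat_concat'[simp]: "concat (concat L) = concat (map concat L)"
  by (induction L) auto

lemma eps_zero: "eps 0 = 0" using eps_scale[of 0 0] by simp

lemma tril_epsL: "tril (\<lambda>a b c. [[scale (eps a) b, c]])"
  unfolding tril_def
  by (auto simp: te_add1 te_add2 te_zero1 te_zero2 eps_add eps_scale eps_zero scale_left_distrib scale_right_distrib
      mult.commute te_balL te_balR intro: tens_eq.te_sym te_bal12)

lemma tril_epsR: "tril (\<lambda>a b c. [[a, scale (eps c) b]])"
  unfolding tril_def
  by (auto simp: te_add1 te_add2 te_zero1 te_zero2 eps_add eps_scale eps_zero scale_left_distrib scale_right_distrib
      mult.commute te_balL te_balR intro: tens_eq.te_sym te_bal12)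

lemma tril_Smult: "tril (\<lambda>a b c. [[S a * b, c]])"
  unfolding tril_def
  by (auto simp: te_add1 te_add2 te_zero1 te_zero2 S_add S_scale S_zero distrib_left distrib_right
      te_balL te_balR intro: tens_eq.te_sym te_bal12 simp flip: scale_mult_left scale_mult_right)

lemma bilf_epsL: "bilf (\<lambda>p q. scale (eps p) q)"
  by (simp add: bilf_def eps_add eps_scale scale_left_distrib scale_right_distrib mult.commute)

lemma bilf_epsR: "bilf (\<lambda>p q. scale (eps q) p)"
  by (simp add: bilf_def eps_add eps_scale scale_left_distrib scale_right_distrib mult.commute)

lemma t2_conv: "concat (map (\<lambda>(a, b). [[a, b]]) X) = t2 X"
  by (induction X) (auto simp: t2_def)

end

context semiquasitriangular begin

definition Qi where "Qi = (SOME Q. t2 (mul R Q) \<approx> t2 [(1, 1)])"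

lemma Qi: "t2 (mul R Qi) \<approx> t2 [(1, 1)]"
proof -
  have "\<exists>Q. t2 (mul R Q) \<approx> t2 [(1, 1)]"
    using R_invertible unfolding mul_def by blast
  then show ?thesis unfolding Qi_def by (rule someI_ex)
qed

lemma u_one: "(\<Sum>(a, b)\<leftarrow>R. scale (eps a) b) = 1"
proof -
  define u where "u = (\<Sum>(a, b)\<leftarrow>R. scale (eps a) b)"
  have m: "concat (map (\<lambda>(a, b, c). [[scale (eps a) b, c]]) [(x1, x2, r2). (r1, r2) \<leftarrow> R, (x1, x2) \<leftarrow> Delta r1])
      \<approx> concat (map (\<lambda>(a, b, c). [[scale (eps a) b, c]]) [(r1, s1, r2 * s2). (r1, r2) \<leftarrow> R, (s1, s2) \<leftarrow> R])"
    by (rule te_map3[OF tril_epsL sq1])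
  have l: "concat (map (\<lambda>(a, b, c). [[scale (eps a) b, c]]) [(x1, x2, r2). (r1, r2) \<leftarrow> R, (x1, x2) \<leftarrow> Delta r1]) \<approx> t2 R"
  proof -
    have "concat (map (\<lambda>(a, b, c). [[scale (eps a) b, c]]) [(x1, x2, r2). (r1, r2) \<leftarrow> R, (x1, x2) \<leftarrow> Delta r1])
        = concat (map (\<lambda>(r1, r2). concat (map (\<lambda>(x1, x2). [[scale (eps x1) x2, r2]]) (Delta r1))) R)"
      by (simp add: map_concat split_def comp_def)
    also have "\<dots> \<approx> concat (map (\<lambda>(r1, r2). [[r1, r2]]) R)"
    proof (rule te_concat, clarify)
      fix r1 r2
      have "map (\<lambda>a. [a, r2]) (map (\<lambda>(x1, x2). scale (eps x1) x2) (Delta r1)) \<approx> [[r1, r2]]"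
        using tens_eq.te_sym[OF te_sum1[of "map (\<lambda>(x1, x2). scale (eps x1) x2) (Delta r1)" r2]]
        by (simp add: counit_left)
      then show "concat (map (\<lambda>(x1, x2). [[scale (eps x1) x2, r2]]) (Delta r1)) \<approx> [[r1, r2]]"
        by (simp add: split_def comp_def)
    qed
    also have "\<dots> = t2 R" by (rule t2_conv)
    finally show ?thesis .
  qed
  have r: "concat (map (\<lambda>(a, b, c). [[scale (eps a) b, c]]) [(r1, s1, r2 * s2). (r1, r2) \<leftarrow> R, (s1, s2) \<leftarrow> R])
      \<approx> t2 (mul [(1, u)] R)"
  proof -
    have "concat (map (\<lambda>(a, b, c). [[scale (eps a) b, c]]) [(r1, s1, r2 * s2). (r1, r2) \<leftarrow> R, (s1, s2) \<leftarrow> R])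
       = concat (map (\<lambda>(r1, r2). concat (map (\<lambda>(s1, s2). [[scale (eps r1) s1, r2 * s2]]) R)) R)"
      by (simp add: map_concat split_def comp_def)
    also have "\<dots> \<approx> concat (map (\<lambda>(r1, r2). concat (map (\<lambda>(s1, s2). [[s1, scale (eps r1) r2 * s2]]) R)) R)"
      by (intro te_concat2) (simp add: te_bal12 scale_mult_left[symmetric])
    also have "\<dots> \<approx> concat (map (\<lambda>(s1, s2). concat (map (\<lambda>(r1, r2). [[s1, scale (eps r1) r2 * s2]]) R)) R)"
      by (rule te_swap2)
    also have "\<dots> \<approx> concat (map (\<lambda>(s1, s2). [[s1, u * s2]]) R)"
    proof (rule te_concat, clarify)
      fix s1 s2
      have "map (\<lambda>a. [s1, a]) (map (\<lambda>(r1, r2). scale (eps r1) r2 * s2) R) \<approx> [[s1, u * s2]]"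
        using tens_eq.te_sym[OF te_sum2[of s1 "map (\<lambda>(r1, r2). scale (eps r1) r2 * s2) R"]]
        by (simp add: u_def sum_list_mult_const split_def)
      then show "concat (map (\<lambda>(r1, r2). [[s1, scale (eps r1) r2 * s2]]) R) \<approx> [[s1, u * s2]]"
        by (simp add: split_def comp_def)
    qed
    also have "\<dots> = t2 (mul [(1, u)] R)"
      by (simp add: t2_conv[symmetric] mul_def split_def comp_def)
    finally show ?thesis .
  qed
  have Ru: "t2 R \<approx> t2 (mul [(1, u)] R)"
    using tens_eq.te_trans[OF tens_eq.te_sym[OF l] tens_eq.te_trans[OF m r]] .
  have "t2 [(1, 1)] \<approx> t2 (mul R Qi)" by (rule tens_eq.te_sym[OF Qi])
  also have "\<dots> \<approx> t2 (mul (mul [(1, u)] R) Qi)" by (rule te_mul_left[OF Ru])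
  also have "\<dots> = t2 (mul [(1, u)] (mul R Qi))" by (simp add: mul_assoc)
  also have "\<dots> \<approx> t2 (mul [(1, u)] [(1, 1)])" by (rule te_mul_right[OF Qi])
  also have "\<dots> = t2 [(1, u)]" by simp
  finally have "t2 [(1, 1)] \<approx> t2 [(1, u)]" .
  from te_fun2[OF bilf_epsL this] have "scale (eps 1) 1 = scale (eps 1) u" by simp
  then show ?thesis by (simp add: eps_one u_def)
qed


lemma v_one: "(\<Sum>(a, b)\<leftarrow>R. scale (eps b) a) = 1"
proof -
  define v where "v = (\<Sum>(a, b)\<leftarrow>R. scale (eps b) a)"
  have m: "concat (map (\<lambda>(a, b, c). [[a, scale (eps c) b]]) [(r1, y1, y2). (r1, r2) \<leftarrow> R, (y1, y2) \<leftarrow> Delta r2])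
      \<approx> concat (map (\<lambda>(a, b, c). [[a, scale (eps c) b]]) [(r1 * s1, s2, r2). (r1, r2) \<leftarrow> R, (s1, s2) \<leftarrow> R])"
    by (rule te_map3[OF tril_epsR sq2])
  have l: "concat (map (\<lambda>(a, b, c). [[a, scale (eps c) b]]) [(r1, y1, y2). (r1, r2) \<leftarrow> R, (y1, y2) \<leftarrow> Delta r2]) \<approx> t2 R"
  proof -
    have "concat (map (\<lambda>(a, b, c). [[a, scale (eps c) b]]) [(r1, y1, y2). (r1, r2) \<leftarrow> R, (y1, y2) \<leftarrow> Delta r2])
        = concat (map (\<lambda>(r1, r2). concat (map (\<lambda>(y1, y2). [[r1, scale (eps y2) y1]]) (Delta r2))) R)"
      by (simp add: map_concat split_def comp_def)
    also have "\<dots> \<approx> concat (map (\<lambda>(r1, r2). [[r1, r2]]) R)"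
    proof (rule te_concat2)
      fix r1 r2
      have "map (\<lambda>a. [r1, a]) (map (\<lambda>(y1, y2). scale (eps y2) y1) (Delta r2)) \<approx> [[r1, r2]]"
        using tens_eq.te_sym[OF te_sum2[of r1 "map (\<lambda>(y1, y2). scale (eps y2) y1) (Delta r2)"]]
        by (simp add: counit_right)
      then show "concat (map (\<lambda>(y1, y2). [[r1, scale (eps y2) y1]]) (Delta r2)) \<approx> [[r1, r2]]"
        by (simp add: split_def comp_def)
    qed
    also have "\<dots> = t2 R" by (rule t2_conv)
    finally show ?thesis .
  qed
  have r: "concat (map (\<lambda>(a, b, c). [[a, scale (eps c) b]]) [(r1 * s1, s2, r2). (r1, r2) \<leftarrow> R, (s1, s2) \<leftarrow> R])
      \<approx> t2 (mul [(v, 1)] R)"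
  proof -
    have "concat (map (\<lambda>(a, b, c). [[a, scale (eps c) b]]) [(r1 * s1, s2, r2). (r1, r2) \<leftarrow> R, (s1, s2) \<leftarrow> R])
       = concat (map (\<lambda>(r1, r2). concat (map (\<lambda>(s1, s2). [[r1 * s1, scale (eps r2) s2]]) R)) R)"
      by (simp add: map_concat split_def comp_def)
    also have "\<dots> \<approx> concat (map (\<lambda>(r1, r2). concat (map (\<lambda>(s1, s2). [[scale (eps r2) r1 * s1, s2]]) R)) R)"
      by (intro te_concat2) (simp add: te_balL scale_mult_left)
    also have "\<dots> \<approx> concat (map (\<lambda>(s1, s2). concat (map (\<lambda>(r1, r2). [[scale (eps r2) r1 * s1, s2]]) R)) R)"
      by (rule te_swap2)
    also have "\<dots> \<approx> concat (map (\<lambda>(s1, s2). [[v * s1, s2]]) R)"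
    proof (rule te_concat2)
      fix s1 s2
      have "map (\<lambda>a. [a, s2]) (map (\<lambda>(r1, r2). scale (eps r2) r1 * s1) R) \<approx> [[v * s1, s2]]"
        using tens_eq.te_sym[OF te_sum1[of "map (\<lambda>(r1, r2). scale (eps r2) r1 * s1) R" s2]]
        by (simp add: v_def sum_list_mult_const split_def)
      then show "concat (map (\<lambda>(r1, r2). [[scale (eps r2) r1 * s1, s2]]) R) \<approx> [[v * s1, s2]]"
        by (simp add: split_def comp_def)
    qed
    also have "\<dots> = t2 (mul [(v, 1)] R)"
      by (simp add: t2_conv[symmetric] mul_def split_def comp_def)
    finally show ?thesis .
  qed
  have Rv: "t2 R \<approx> t2 (mul [(v, 1)] R)"
    using tens_eq.te_trans[OF tens_eq.te_sym[OF l] tens_eq.te_trans[OF m r]] .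
  have "t2 [(1, 1)] \<approx> t2 (mul R Qi)" by (rule tens_eq.te_sym[OF Qi])
  also have "\<dots> \<approx> t2 (mul (mul [(v, 1)] R) Qi)" by (rule te_mul_left[OF Rv])
  also have "\<dots> = t2 (mul [(v, 1)] (mul R Qi))" by (simp add: mul_assoc)
  also have "\<dots> \<approx> t2 (mul [(v, 1)] [(1, 1)])" by (rule te_mul_right[OF Qi])
  also have "\<dots> = t2 [(v, 1)]" by (simp add: mul_def)
  finally have "t2 [(1, 1)] \<approx> t2 [(v, 1)]" .
  from te_fun2[OF bilf_epsR this] have "scale (eps 1) 1 = scale (eps 1) v" by simp
  then show ?thesis by (simp add: eps_one v_def)
qed

definition P where "P = map (\<lambda>(a, b). (S a, b)) R"

lemma PR: "t2 (mul P R) \<approx> t2 [(1, 1)]"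
proof -
  have m: "concat (map (\<lambda>(a, b, c). [[S a * b, c]]) [(x1, x2, r2). (r1, r2) \<leftarrow> R, (x1, x2) \<leftarrow> Delta r1])
      \<approx> concat (map (\<lambda>(a, b, c). [[S a * b, c]]) [(r1, s1, r2 * s2). (r1, r2) \<leftarrow> R, (s1, s2) \<leftarrow> R])"
    by (rule te_map3[OF tril_Smult sq1])
  have l: "concat (map (\<lambda>(a, b, c). [[S a * b, c]]) [(x1, x2, r2). (r1, r2) \<leftarrow> R, (x1, x2) \<leftarrow> Delta r1]) \<approx> t2 [(1, 1)]"
  proof -
    have "concat (map (\<lambda>(a, b, c). [[S a * b, c]]) [(x1, x2, r2). (r1, r2) \<leftarrow> R, (x1, x2) \<leftarrow> Delta r1])
        = concat (map (\<lambda>(r1, r2). concat (map (\<lambda>(x1, x2). [[S x1 * x2, r2]]) (Delta r1))) R)"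
      by (simp add: map_concat split_def comp_def)
    also have "\<dots> \<approx> concat (map (\<lambda>(r1, r2). [[1, scale (eps r1) r2]]) R)"
    proof (rule te_concat2)
      fix r1 r2
      have "map (\<lambda>a. [a, r2]) (map (\<lambda>(x1, x2). S x1 * x2) (Delta r1)) \<approx> [[scale (eps r1) 1, r2]]"
        using tens_eq.te_sym[OF te_sum1[of "map (\<lambda>(x1, x2). S x1 * x2) (Delta r1)" r2]]
        by (simp add: antipode_left)
      then have "concat (map (\<lambda>(x1, x2). [[S x1 * x2, r2]]) (Delta r1)) \<approx> [[scale (eps r1) 1, r2]]"
        by (simp add: split_def comp_def)
      then show "concat (map (\<lambda>(x1, x2). [[S x1 * x2, r2]]) (Delta r1)) \<approx> [[1, scale (eps r1) r2]]"
        by (rule tens_eq.te_trans[OF _ te_bal12])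
    qed
    also have "\<dots> \<approx> [[1, 1]]"
      using tens_eq.te_sym[OF te_sum2[of 1 "map (\<lambda>(r1, r2). scale (eps r1) r2) R"]]
      by (simp add: u_one[unfolded split_def] split_def comp_def)
    finally show ?thesis by (simp add: t2_def)
  qed
  have r: "concat (map (\<lambda>(a, b, c). [[S a * b, c]]) [(r1, s1, r2 * s2). (r1, r2) \<leftarrow> R, (s1, s2) \<leftarrow> R]) = t2 (mul P R)"
    by (simp add: t2_def P_def mul_def map_concat split_def comp_def)
  show ?thesis using tens_eq.te_trans[OF tens_eq.te_sym[OF m] l] r by simp
qed

lemma inv_lemma: assumes "t2 (mul X R) \<approx> t2 [(1, 1)]" shows "t2 (mul R X) \<approx> t2 [(1, 1)]"
proof -
  have "t2 X = t2 (mul X [(1, 1)])" by simp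
  also have "\<dots> \<approx> t2 (mul X (mul R Qi))" by (rule te_mul_right[OF tens_eq.te_sym[OF Qi]])
  also have "\<dots> = t2 (mul (mul X R) Qi)" by (simp add: mul_assoc)
  also have "\<dots> \<approx> t2 (mul [(1, 1)] Qi)" by (rule te_mul_left[OF assms])
  also have "\<dots> = t2 Qi" by simp
  finally have "t2 X \<approx> t2 Qi" .
  then have "t2 (mul R X) \<approx> t2 (mul R Qi)" by (rule te_mul_right)
  then show ?thesis using tens_eq.te_trans Qi by metis
qed

lemma RP: "t2 (mul R P) \<approx> t2 [(1, 1)]" by (rule inv_lemma[OF PR])


definition Sinv where "Sinv = inv S"

lemma S_Sinv[simp]: "S (Sinv x) = x"
  using S_bij unfolding Sinv_def by (simp add: bij_def surj_f_inv_f)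
lemma Sinv_S[simp]: "Sinv (S x) = x"
  using S_bij unfolding Sinv_def by (simp add: bij_def inv_f_f)
lemma S_inj: "S a = S b \<Longrightarrow> a = b"
  by (metis Sinv_S)
lemma Sinv_mult: "Sinv (x * y) = Sinv y * Sinv x"
  by (rule S_inj) (simp add: S_antimult)
lemma Sinv_add: "Sinv (x + y) = Sinv x + Sinv y"
  by (rule S_inj) (simp add: S_add)
lemma Sinv_scale: "Sinv (scale c x) = scale c (Sinv x)"
  by (rule S_inj) (simp add: S_scale)
lemma Sinv_one: "Sinv 1 = 1"
  by (rule S_inj) (simp add: S_one)
lemma Sinv_zero: "Sinv 0 = 0"
  by (rule S_inj) (simp add: S_zero)
lemma Sinv_sum: "Sinv (\<Sum>a\<leftarrow>L. f a) = (\<Sum>a\<leftarrow>L. Sinv (f a))"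
  by (induction L) (simp_all add: Sinv_add Sinv_zero)

lemma antipode_Sinv: "(\<Sum>(a, b)\<leftarrow>Delta x. Sinv b * a) = scale (eps x) 1"
proof -
  have "Sinv (\<Sum>(a, b)\<leftarrow>Delta x. S a * b) = Sinv (scale (eps x) 1)" by (simp add: antipode_left)
  then show ?thesis by (simp add: Sinv_sum Sinv_mult Sinv_scale Sinv_one split_def)
qed

lemma tril_SinvR: "tril (\<lambda>a b c. [[a, Sinv c * b]])"
  unfolding tril_def
  by (auto simp: te_add1 te_add2 te_zero1 te_zero2 Sinv_add Sinv_scale Sinv_zero distrib_left distrib_right
      te_balL te_balR intro: tens_eq.te_sym te_bal12 simp flip: scale_mult_left scale_mult_right)

definition Pinv where "Pinv = map (\<lambda>(a, b). (a, Sinv b)) R"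

lemma PinvR: "t2 (mul Pinv R) \<approx> t2 [(1, 1)]"
proof -
  have m: "concat (map (\<lambda>(a, b, c). [[a, Sinv c * b]]) [(r1, y1, y2). (r1, r2) \<leftarrow> R, (y1, y2) \<leftarrow> Delta r2])
      \<approx> concat (map (\<lambda>(a, b, c). [[a, Sinv c * b]]) [(r1 * s1, s2, r2). (r1, r2) \<leftarrow> R, (s1, s2) \<leftarrow> R])"
    by (rule te_map3[OF tril_SinvR sq2])
  have l: "concat (map (\<lambda>(a, b, c). [[a, Sinv c * b]]) [(r1, y1, y2). (r1, r2) \<leftarrow> R, (y1, y2) \<leftarrow> Delta r2]) \<approx> t2 [(1, 1)]"
  proof -
    have "concat (map (\<lambda>(a, b, c). [[a, Sinv c * b]]) [(r1, y1, y2). (r1, r2) \<leftarrow> R, (y1, y2) \<leftarrow> Delta r2])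
        = concat (map (\<lambda>(r1, r2). concat (map (\<lambda>(y1, y2). [[r1, Sinv y2 * y1]]) (Delta r2))) R)"
      by (simp add: map_concat split_def comp_def)
    also have "\<dots> \<approx> concat (map (\<lambda>(r1, r2). [[scale (eps r2) r1, 1]]) R)"
    proof (rule te_concat2)
      fix r1 r2
      have "map (\<lambda>a. [r1, a]) (map (\<lambda>(y1, y2). Sinv y2 * y1) (Delta r2)) \<approx> [[r1, scale (eps r2) 1]]"
        using tens_eq.te_sym[OF te_sum2[of r1 "map (\<lambda>(y1, y2). Sinv y2 * y1) (Delta r2)"]]
        by (simp add: antipode_Sinv[unfolded split_def] split_def)
      then have "concat (map (\<lambda>(y1, y2). [[r1, Sinv y2 * y1]]) (Delta r2)) \<approx> [[r1, scale (eps r2) 1]]"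
        by (simp add: split_def comp_def)
      then show "concat (map (\<lambda>(y1, y2). [[r1, Sinv y2 * y1]]) (Delta r2)) \<approx> [[scale (eps r2) r1, 1]]"
        by (rule tens_eq.te_trans[OF _ te_balL]) simp
    qed
    also have "\<dots> \<approx> [[1, 1]]"
      using tens_eq.te_sym[OF te_sum1[of "map (\<lambda>(r1, r2). scale (eps r2) r1) R" 1]]
      by (simp add: v_one[unfolded split_def] split_def comp_def)
    finally show ?thesis by (simp add: t2_def)
  qed
  have r: "concat (map (\<lambda>(a, b, c). [[a, Sinv c * b]]) [(r1 * s1, s2, r2). (r1, r2) \<leftarrow> R, (s1, s2) \<leftarrow> R]) = t2 (mul Pinv R)"
    by (simp add: t2_def Pinv_def mul_def map_concat split_def comp_def)
  show ?thesis using tens_eq.te_trans[OF tens_eq.te_sym[OF m] l] r by simp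
qed

lemma RPinv: "t2 (mul R Pinv) \<approx> t2 [(1, 1)]" by (rule inv_lemma[OF PinvR])

lemma E2: "t2 [(s1 * u1, u2 * S s2). (s1, s2) \<leftarrow> R, (u1, u2) \<leftarrow> R] \<approx> t2 [(1, 1)]"
proof -
  have b: "bil (\<lambda>p q. [[p, S q]])" by (rule bil_pure[OF lin_id lin_S])
  have "concat (map (\<lambda>(a, b). [[a, S b]]) (mul R Pinv)) \<approx> concat (map (\<lambda>(a, b). [[a, S b]]) [(1, 1)])"
    using te_map2[OF b RPinv] .
  moreover have "concat (map (\<lambda>(a, b). [[a, S b]]) (mul R Pinv)) = t2 [(s1 * u1, u2 * S s2). (s1, s2) \<leftarrow> R, (u1, u2) \<leftarrow> R]"
    by (simp add: t2_def Pinv_def mul_def map_concat split_def comp_def S_antimult)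
  ultimately show ?thesis by (simp add: S_one t2_def)
qed

lemma E1: "t2 [(b2 * s2, S (S s1) * S b1). (b1, b2) \<leftarrow> R, (s1, s2) \<leftarrow> R] \<approx> t2 [(1, 1)]"
proof -
  have b: "bil (\<lambda>p q. [[q, S p]])" by (rule bil_pure_sw[OF lin_S lin_id])
  have "concat (map (\<lambda>(a, b). [[b, S a]]) (mul R P)) \<approx> concat (map (\<lambda>(a, b). [[b, S a]]) [(1, 1)])"
    using te_map2[OF b RP] .
  moreover have "concat (map (\<lambda>(a, b). [[b, S a]]) (mul R P)) = t2 [(b2 * s2, S (S s1) * S b1). (b1, b2) \<leftarrow> R, (s1, s2) \<leftarrow> R]"
    by (simp add: t2_def P_def mul_def map_concat split_def comp_def S_antimult)
  ultimately show ?thesis by (simp add: S_one t2_def)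
qed


lemma cent:
  assumes MN: "t2 M \<approx> t2 (nu Delta S R x)" and b1: "bil W1" and b2: "bil W2"
    and eq: "\<And>p z. z \<in> centre \<Longrightarrow> W1 p z = W2 p z"
  shows "concat (map (\<lambda>(a, b). W1 a b) M) \<approx> concat (map (\<lambda>(a, b). W2 a b) M)"
proof -
  obtain zs where zc: "\<forall>(a, z) \<in> set zs. z \<in> centre" and nz: "t2 (nu Delta S R x) \<approx> t2 zs"
    using sq5[of x] by blast
  have Mz: "t2 M \<approx> t2 zs" using tens_eq.te_trans[OF MN nz] .
  have "concat (map (\<lambda>(a, b). W1 a b) M) \<approx> concat (map (\<lambda>(a, b). W1 a b) zs)" by (rule te_map2[OF b1 Mz])
  also have "concat (map (\<lambda>(a, b). W1 a b) zs) = concat (map (\<lambda>(a, b). W2 a b) zs)"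
    using zc by (auto simp: eq intro!: arg_cong[where f=concat] map_cong)
  also have "\<dots> \<approx> concat (map (\<lambda>(a, b). W2 a b) M)" by (rule tens_eq.te_sym[OF te_map2[OF b2 Mz]])
  finally show ?thesis .
qed

lemma te_swap_m: "concat (map (\<lambda>a. map (\<lambda>b. g a b) B) A) \<approx> concat (map (\<lambda>b. map (\<lambda>a. g a b) A) B)"
  using te_swap[of "\<lambda>a b. [g a b]" B A] by simp

lemma te_swap_in: "concat (map (\<lambda>r. concat (map (\<lambda>s. map (\<lambda>h. g r s h) C) B)) A)
   \<approx> concat (map (\<lambda>r. concat (map (\<lambda>h. map (\<lambda>s. g r s h) B) C)) A)"
proof (rule te_concat)
  fix r
  show "concat (map (\<lambda>s. map (\<lambda>h. g r s h) C) B) \<approx> concat (map (\<lambda>h. map (\<lambda>s. g r s h) B) C)"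
    using te_swap[of "\<lambda>s h. [g r s h]" C B] by simp
qed

lemma goal1: "t2 (nu Delta S R x) \<approx> t2 [(r2 * h2 * s2, S (S s1) * S h1 * S r1 * h3).
                 (r1, r2) \<leftarrow> R, (s1, s2) \<leftarrow> R, (h1, h2, h3) \<leftarrow> Delta2 Delta x]"
proof -
  define D where "D = Delta2 Delta x"
  define N where "N = nu Delta S R x"
  have N_def': "N = [(r2 * h2 * s2, S h1 * S r1 * h3 * s1). (r1, r2) \<leftarrow> R, (s1, s2) \<leftarrow> R, (h1, h2, h3) \<leftarrow> D]"
    by (simp add: N_def nu_def D_def)
  define N' where "N' = [(r2 * h2 * a2, S h1 * S r1 * h3 * a1). (a1, a2) \<leftarrow> R, (r1, r2) \<leftarrow> R, (h1, h2, h3) \<leftarrow> D]"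
  have NN': "t2 N \<approx> t2 N'"
    unfolding N_def' N'_def t2_def
    apply (simp add: map_concat split_def comp_def)
    apply (rule te_swap)
    done
  define G1 where "G1 = [(r2 * h2 * s2, S (S s1) * S h1 * S r1 * h3). (r1, r2) \<leftarrow> R, (s1, s2) \<leftarrow> R, (h1, h2, h3) \<leftarrow> D]"
  define G1' where "G1' = [(r2 * h2 * s2, S (S s1) * S h1 * S r1 * h3). (r1, r2) \<leftarrow> R, (h1, h2, h3) \<leftarrow> D, (s1, s2) \<leftarrow> R]"
  have GG': "t2 G1 \<approx> t2 G1'"
    unfolding G1_def G1'_def t2_def
    apply (simp add: map_concat split_def comp_def)
    apply (rule te_swap_in)
    done
  define E' where "E' = [(a1 * S b1, a2 * b2). (b1, b2) \<leftarrow> R, (a1, a2) \<leftarrow> R]"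
  have E'1: "t2 E' \<approx> t2 [(1, 1)]"
  proof -
    have "t2 E' \<approx> t2 (mul R P)"
      unfolding E'_def mul_def P_def t2_def
      apply (simp add: map_concat split_def comp_def)
      apply (rule te_swap_m)
      done
    then show ?thesis by (rule tens_eq.te_trans[OF _ RP])
  qed
  define RDR where "RDR = [(r, h, s). r \<leftarrow> R, h \<leftarrow> D, s \<leftarrow> R]"
  define W1 where "W1 = (\<lambda>p q. concat (map (\<lambda>((r1, r2), (h1, h2, h3), (s1, s2)). [[r2 * h2 * q * s2, S (S s1) * S h1 * S r1 * h3 * p]]) RDR))"
  have bW1: "bil W1"
    unfolding W1_def split_def by (rule bil_gen_sw) (intro lin_lmult lin_rmult lin_id)+
  have X1: "concat (map (\<lambda>(p, q). W1 p q) E') \<approx> t2 G1'"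
    using te_map2[OF bW1 E'1] by (simp add: W1_def RDR_def G1'_def t2_def map_concat split_def comp_def)
  define W2 where "W2 = (\<lambda>b1 b2 p q. concat (map (\<lambda>(s1, s2). [[p * b2 * s2, S (S s1) * q * S b1]]) R))"
  define W2c where "W2c = (\<lambda>b1 b2 p q. concat (map (\<lambda>(s1, s2). [[p * b2 * s2, q * S (S s1) * S b1]]) R))"
  have XY: "concat (map (\<lambda>(p, q). W1 p q) E') = concat (map (\<lambda>(b1, b2). concat (map (\<lambda>(p, q). W2 b1 b2 p q) N')) R)"
    by (simp add: W1_def W2_def RDR_def E'_def N'_def map_concat split_def comp_def mult.assoc)
  have YYc: "concat (map (\<lambda>(b1, b2). concat (map (\<lambda>(p, q). W2 b1 b2 p q) N')) R)
      \<approx> concat (map (\<lambda>(b1, b2). concat (map (\<lambda>(p, q). W2c b1 b2 p q) N')) R)"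
  proof (rule te_concat2)
    fix b1 b2
    have N'N: "t2 N' \<approx> t2 (nu Delta S R x)" using tens_eq.te_sym[OF NN'] by (simp add: N_def)
    show "concat (map (\<lambda>(p, q). W2 b1 b2 p q) N') \<approx> concat (map (\<lambda>(p, q). W2c b1 b2 p q) N')"
    proof (rule cent[OF N'N])
      show "bil (W2 b1 b2)" unfolding W2_def split_def by (rule bil_gen) (intro lin_lmult lin_rmult lin_id)+
      show "bil (W2c b1 b2)" unfolding W2c_def split_def by (rule bil_gen) (intro lin_lmult lin_rmult lin_id)+
      fix p z :: 'h assume "z \<in> centre"
      then have "\<And>y. y * z = z * y" by (simp add: centre_def)
      then show "W2 b1 b2 p z = W2c b1 b2 p z" by (simp add: W2_def W2c_def)
    qed
  qed
  have YcYs: "concat (map (\<lambda>(b1, b2). concat (map (\<lambda>(p, q). W2c b1 b2 p q) N')) R)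
      \<approx> concat (map (\<lambda>(b1, b2). concat (map (\<lambda>(s1, s2). concat (map (\<lambda>(p, q). [[p * b2 * s2, q * S (S s1) * S b1]]) N')) R)) R)"
  proof (rule te_concat2)
    fix b1 b2
    show "concat (map (\<lambda>(p, q). W2c b1 b2 p q) N') \<approx> concat (map (\<lambda>(s1, s2). concat (map (\<lambda>(p, q). [[p * b2 * s2, q * S (S s1) * S b1]]) N')) R)"
      unfolding W2c_def by (rule te_swap2)
  qed
  define W3 where "W3 = (\<lambda>p q. concat (map (\<lambda>(n1, n2). [[n1 * p, n2 * q]]) N'))"
  have bW3: "bil W3" unfolding W3_def split_def by (rule bil_gen) (intro lin_lmult lin_rmult lin_id)+
  have Ys: "concat (map (\<lambda>(b1, b2). concat (map (\<lambda>(s1, s2). concat (map (\<lambda>(p, q). [[p * b2 * s2, q * S (S s1) * S b1]]) N')) R)) R)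
      = concat (map (\<lambda>(p, q). W3 p q) [(b2 * s2, S (S s1) * S b1). (b1, b2) \<leftarrow> R, (s1, s2) \<leftarrow> R])"
    by (simp add: W3_def map_concat split_def comp_def mult.assoc)
  have YsN: "concat (map (\<lambda>(p, q). W3 p q) [(b2 * s2, S (S s1) * S b1). (b1, b2) \<leftarrow> R, (s1, s2) \<leftarrow> R]) \<approx> t2 N'"
    using te_map2[OF bW3 E1] by (simp add: W3_def t2_conv)
  note GG'
  also note tens_eq.te_sym[OF X1]
  also note XY
  also note YYc
  also note YcYs
  also note Ys
  also note YsN
  also note tens_eq.te_sym[OF NN']
  finally have "t2 G1 \<approx> t2 N" .
  then have "t2 N \<approx> t2 G1" by (rule tens_eq.te_sym)
  then show ?thesis by (simp add: N_def G1_def D_def)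
qed


lemma goal2: "t2 (nu Delta S R x) \<approx> t2 [(r1 * h2 * S s1, S h1 * r2 * h3 * s2).
                 (r1, r2) \<leftarrow> R, (s1, s2) \<leftarrow> R, (h1, h2, h3) \<leftarrow> Delta2 Delta x]"
proof -
  define D where "D = Delta2 Delta x"
  define N where "N = nu Delta S R x"
  define N6 where "N6 = [(r1 * h2 * s1, S s2 * S h1 * r2 * h3). (r1, r2) \<leftarrow> R, (s1, s2) \<leftarrow> R, (h1, h2, h3) \<leftarrow> D]"
  have NN6: "t2 N \<approx> t2 N6" using sq6[of x] unfolding N_def N6_def D_def .
  define N6' where "N6' = [(r1 * h2 * s1, S s2 * S h1 * r2 * h3). (s1, s2) \<leftarrow> R, (r1, r2) \<leftarrow> R, (h1, h2, h3) \<leftarrow> D]"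
  have N66': "t2 N6 \<approx> t2 N6'"
    unfolding N6_def N6'_def t2_def
    apply (simp add: map_concat split_def comp_def)
    apply (rule te_swap)
    done
  have N6'N: "t2 N6' \<approx> t2 (nu Delta S R x)"
    using tens_eq.te_sym[OF tens_eq.te_trans[OF NN6 N66']] by (simp add: N_def)
  define G2 where "G2 = [(r1 * h2 * S s1, S h1 * r2 * h3 * s2). (r1, r2) \<leftarrow> R, (s1, s2) \<leftarrow> R, (h1, h2, h3) \<leftarrow> D]"
  define G2' where "G2' = [(r1 * h2 * S s1, S h1 * r2 * h3 * s2). (r1, r2) \<leftarrow> R, (h1, h2, h3) \<leftarrow> D, (s1, s2) \<leftarrow> R]"
  have GG': "t2 G2 \<approx> t2 G2'"
    unfolding G2_def G2'_def t2_def
    apply (simp add: map_concat split_def comp_def)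
    apply (rule te_swap_in)
    done
  define E' where "E' = [(s1 * u1, u2 * S s2). (u1, u2) \<leftarrow> R, (s1, s2) \<leftarrow> R]"
  have E'1: "t2 E' \<approx> t2 [(1, 1)]"
  proof -
    have "t2 E' \<approx> t2 [(s1 * u1, u2 * S s2). (s1, s2) \<leftarrow> R, (u1, u2) \<leftarrow> R]"
      unfolding E'_def t2_def
      apply (simp add: map_concat split_def comp_def)
      apply (rule te_swap_m)
      done
    then show ?thesis by (rule tens_eq.te_trans[OF _ E2])
  qed
  define RDR where "RDR = [(r, h, s). r \<leftarrow> R, h \<leftarrow> D, s \<leftarrow> R]"
  define W1 where "W1 = (\<lambda>p q. concat (map (\<lambda>((r1, r2), (h1, h2, h3), (t1, t2)). [[r1 * h2 * p * S t1, q * S h1 * r2 * h3 * t2]]) RDR))"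
  have bW1: "bil W1"
    unfolding W1_def split_def by (rule bil_gen) (intro lin_lmult lin_rmult lin_id)+
  have X1: "concat (map (\<lambda>(p, q). W1 p q) E') \<approx> t2 G2'"
    using te_map2[OF bW1 E'1] by (simp add: W1_def RDR_def G2'_def t2_def map_concat split_def comp_def)
  define W2 where "W2 = (\<lambda>u1 u2 p q. concat (map (\<lambda>(t1, t2). [[p * u1 * S t1, u2 * q * t2]]) R))"
  define W2c where "W2c = (\<lambda>u1 u2 p q. concat (map (\<lambda>(t1, t2). [[p * u1 * S t1, q * u2 * t2]]) R))"
  have XY: "concat (map (\<lambda>(p, q). W1 p q) E') = concat (map (\<lambda>(u1, u2). concat (map (\<lambda>(p, q). W2 u1 u2 p q) N6')) R)"
    by (simp add: W1_def W2_def RDR_def E'_def N6'_def map_concat split_def comp_def mult.assoc)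
  have YYc: "concat (map (\<lambda>(u1, u2). concat (map (\<lambda>(p, q). W2 u1 u2 p q) N6')) R)
      \<approx> concat (map (\<lambda>(u1, u2). concat (map (\<lambda>(p, q). W2c u1 u2 p q) N6')) R)"
  proof (rule te_concat2)
    fix u1 u2
    show "concat (map (\<lambda>(p, q). W2 u1 u2 p q) N6') \<approx> concat (map (\<lambda>(p, q). W2c u1 u2 p q) N6')"
    proof (rule cent[OF N6'N])
      show "bil (W2 u1 u2)" unfolding W2_def split_def by (rule bil_gen) (intro lin_lmult lin_rmult lin_id)+
      show "bil (W2c u1 u2)" unfolding W2c_def split_def by (rule bil_gen) (intro lin_lmult lin_rmult lin_id)+
      fix p z :: 'h assume "z \<in> centre"
      then have "\<And>y. y * z = z * y" by (simp add: centre_def)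
      then show "W2 u1 u2 p z = W2c u1 u2 p z" by (simp add: W2_def W2c_def)
    qed
  qed
  have YcYs: "concat (map (\<lambda>(u1, u2). concat (map (\<lambda>(p, q). W2c u1 u2 p q) N6')) R)
      \<approx> concat (map (\<lambda>(u1, u2). concat (map (\<lambda>(t1, t2). concat (map (\<lambda>(p, q). [[p * u1 * S t1, q * u2 * t2]]) N6')) R)) R)"
  proof (rule te_concat2)
    fix u1 u2
    show "concat (map (\<lambda>(p, q). W2c u1 u2 p q) N6') \<approx> concat (map (\<lambda>(t1, t2). concat (map (\<lambda>(p, q). [[p * u1 * S t1, q * u2 * t2]]) N6')) R)"
      unfolding W2c_def by (rule te_swap2)
  qed
  define W3 where "W3 = (\<lambda>p q. concat (map (\<lambda>(n1, n2). [[n1 * p, n2 * q]]) N6'))"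
  have bW3: "bil W3" unfolding W3_def split_def by (rule bil_gen) (intro lin_lmult lin_rmult lin_id)+
  have Ys: "concat (map (\<lambda>(u1, u2). concat (map (\<lambda>(t1, t2). concat (map (\<lambda>(p, q). [[p * u1 * S t1, q * u2 * t2]]) N6')) R)) R)
      = concat (map (\<lambda>(p, q). W3 p q) (mul R P))"
    by (simp add: W3_def mul_def P_def map_concat split_def comp_def mult.assoc)
  have YsN: "concat (map (\<lambda>(p, q). W3 p q) (mul R P)) \<approx> t2 N6'"
    using te_map2[OF bW3 RP] by (simp add: W3_def t2_conv)
  note GG'
  also note tens_eq.te_sym[OF X1]
  also note XY
  also note YYc
  also note YcYs
  also note Ys
  also note YsN
  also note N6'N
  finally have "t2 G2 \<approx> t2 (nu Delta S R x)" .
  then have "t2 (nu Delta S R x) \<approx> t2 G2" by (rule tens_eq.te_sym)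
  then show ?thesis by (simp add: G2_def D_def)
qed

end

theorem proposition1p9:
  fixes scale :: "'k::field \<Rightarrow> 'h::ring_1 \<Rightarrow> 'h"
    and Delta :: "'h \<Rightarrow> ('h \<times> 'h) list"
    and eps :: "'h \<Rightarrow> 'k"
    and S :: "'h \<Rightarrow> 'h"
    and R :: "('h \<times> 'h) list"
  assumes "semiquasitriangular scale Delta eps S R"
  shows "tens_eq scale (t2 (nu Delta S R x))
           (t2 [(r2 * h2 * s2, S (S s1) * S h1 * S r1 * h3).
                 (r1, r2) \<leftarrow> R, (s1, s2) \<leftarrow> R, (h1, h2, h3) \<leftarrow> Delta2 Delta x])
       \<and> tens_eq scale (t2 (nu Delta S R x))
           (t2 [(r1 * h2 * S s1, S h1 * r2 * h3 * s2).
                 (r1, r2) \<leftarrow> R, (s1, s2) \<leftarrow> R, (h1, h2, h3) \<leftarrow> Delta2 Delta x])"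
proof -
  interpret semiquasitriangular scale Delta eps S R by (rule assms)
  show ?thesis using goal1 goal2 by blast
qed

end
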